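(* Let $\mathcal{M}$ be a matroid of rank $c$ on $[n]$, $J=J(\mathcal{M})$, and order $G(J)$ by the iterated-contraction order $\preceq$ along an ordered basis $(v_1,\ldots,v_c)$ (see context). Then for every $N\in G(J)$ with $N\ne\min G(J)$, $$C_N=J(\mathcal{M}/\{v_1,\ldots,v_{i_N+1}\}):N.$$ In particular, $C_N$ is a $C$-matroidal ideal.
   Context: $R=\mathbb{K}[x_1,\ldots,x_n]$, $\mathbb{K}$ a field. For a matroid $\mathcal{N}$ on $E\subseteq[n]$, $J(\mathcal{N})=\bigcap_{F\in\mathcal{B}(\mathcal{N})}(x_i:i\in F)$, formed in $\mathbb{K}[x_i:i\in E]$ and extended to $R$. $\mathcal{M}/A$ is contraction by an independent set $A$. $G(\cdot)$ is the set of minimal monomial generators. A squarefree monomial ideal is $C$-matroidal if it is the cover ideal of some matroid (equivalently the Stanley–Reisner ideal of the independence complex of a matroid). Order: $J_i=J(\mathcal{M}/\{v_1,\ldots,v_i\})$ for $0\le i\le c$; one has $G(J_c)\subseteq\cdots\subseteq G(J_0)=G(J)$. Choose any total order on each $G(J_i)-G(J_{i+1})$; for $N\in G(J)$ let $i_N$ be the index with $N\in G(J_i)-G(J_{i+1})$; set $N\prec N'$ iff $i_N>i_{N'}$, or $i_N=i_{N'}$ and $N$ precedes $N'$ in the chosen order on $G(J_{i_N})-G(J_{i_N+1})$. For $N\ne\min G(J)$, $C_N=(N'\in G(J):N'\prec N):N$. *)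

theory Defs
  imports Main
begin

text \<open>Monomials of R = K[x_1..x_n] are represented by exponent vectors (nat => nat)
 supported in {1..n}. A monomial ideal of R is represented by the set of monomials it
 contains (a monomial ideal is determined by this set).\<close>

type_synonym mono = "nat \<Rightarrow> nat"

definition rmonos :: "nat \<Rightarrow> mono set" where
  "rmonos n = {m. \<forall>i. m i \<noteq> 0 \<longrightarrow> i \<in> {1..n}}"

definition mmult :: "mono \<Rightarrow> mono \<Rightarrow> mono" where
  "mmult m m' = (\<lambda>i. m i + m' i)"

definition mdvd :: "mono \<Rightarrow> mono \<Rightarrow> bool" where
  "mdvd m m' \<longleftrightarrow> (\<forall>i. m i \<le> m' i)"

definition mideal_gen :: "nat \<Rightarrow> mono set \<Rightarrow> mono set" where
  "mideal_gen n S = {m \<in> rmonos n. \<exists>s\<in>S. mdvd s m}"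

definition mcolon :: "nat \<Rightarrow> mono set \<Rightarrow> mono \<Rightarrow> mono set" where
  "mcolon n I N = {m \<in> rmonos n. mmult m N \<in> I}"

definition mingens :: "mono set \<Rightarrow> mono set" where
  "mingens I = {m \<in> I. \<forall>m'\<in>I. mdvd m' m \<longrightarrow> m' = m}"

definition matroid :: "nat set \<Rightarrow> nat set set \<Rightarrow> bool" where
  "matroid E B \<longleftrightarrow> finite E \<and> B \<noteq> {} \<and> (\<forall>F\<in>B. F \<subseteq> E) \<and>
     (\<forall>B1\<in>B. \<forall>B2\<in>B. \<forall>x\<in>B1 - B2. \<exists>y\<in>B2 - B1. insert y (B1 - {x}) \<in> B)"

definition matroid_rank_eq :: "nat set set \<Rightarrow> nat \<Rightarrow> bool" where
  "matroid_rank_eq B c \<longleftrightarrow> (\<forall>F\<in>B. card F = c)"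

definition contract :: "nat set set \<Rightarrow> nat set \<Rightarrow> nat set set" where
  "contract B A = {F - A | F. F \<in> B \<and> A \<subseteq> F}"

text \<open>J(N) = intersection over bases F of (x_i : i in F), formed in K[x_i : i in E]
  and extended to R; as a set of monomials of R.\<close>
definition Jmat :: "nat \<Rightarrow> nat set set \<Rightarrow> mono set" where
  "Jmat n B = {m \<in> rmonos n. \<forall>F\<in>B. \<exists>i\<in>F. m i \<noteq> 0}"

definition C_matroidal :: "nat \<Rightarrow> mono set \<Rightarrow> bool" where
  "C_matroidal n I \<longleftrightarrow> (\<exists>E B. E \<subseteq> {1..n} \<and> matroid E B \<and> I = Jmat n B)"

definition Jseq :: "nat \<Rightarrow> nat set set \<Rightarrow> (nat \<Rightarrow> nat) \<Rightarrow> nat \<Rightarrow> mono set" where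
  "Jseq n B v i = Jmat n (contract B (v ` {1..i}))"

text \<open>i_N: the index i with N in G(J_i) - G(J_{i+1}) (note G(J_c) is empty)\<close>
definition idx :: "nat \<Rightarrow> nat set set \<Rightarrow> (nat \<Rightarrow> nat) \<Rightarrow> nat \<Rightarrow> mono \<Rightarrow> nat" where
  "idx n B v c N = (THE i. i < c \<and> N \<in> mingens (Jseq n B v i) \<and>
                          N \<notin> mingens (Jseq n B v (Suc i)))"

text \<open>The order N \<prec> N'; r is a strict total order on G(J) whose restriction to each
  block G(J_i) - G(J_{i+1}) is the chosen order on that block.\<close>
definition prec :: "nat \<Rightarrow> nat set set \<Rightarrow> (nat \<Rightarrow> nat) \<Rightarrow> nat \<Rightarrow> (mono \<times> mono) set
                     \<Rightarrow> mono \<Rightarrow> mono \<Rightarrow> bool" where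
  "prec n B v c r N N' \<longleftrightarrow> idx n B v c N > idx n B v c N' \<or>
     (idx n B v c N = idx n B v c N' \<and> (N, N') \<in> r)"

definition minG :: "nat \<Rightarrow> nat set set \<Rightarrow> (nat \<Rightarrow> nat) \<Rightarrow> nat \<Rightarrow> (mono \<times> mono) set \<Rightarrow> mono" where
  "minG n B v c r = (THE m. m \<in> mingens (Jmat n B) \<and>
       (\<forall>N'\<in>mingens (Jmat n B). N' \<noteq> m \<longrightarrow> prec n B v c r m N'))"

definition CN :: "nat \<Rightarrow> nat set set \<Rightarrow> (nat \<Rightarrow> nat) \<Rightarrow> nat \<Rightarrow> (mono \<times> mono) set \<Rightarrow> mono \<Rightarrow> mono set" where
  "CN n B v c r N = mcolon n
     (mideal_gen n {N' \<in> mingens (Jmat n B). prec n B v c r N' N}) N"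

end

theory Submission
  imports Defs
begin

lemma sym_exch:
  assumes fin: "\<forall>F\<in>B. finite F" and cardeq: "\<forall>F\<in>B. card F = c"
    and ax: "\<forall>B1\<in>B. \<forall>B2\<in>B. \<forall>x\<in>B1 - B2. \<exists>y\<in>B2 - B1. insert y (B1 - {x}) \<in> B"
  shows "B1 \<in> B \<Longrightarrow> B2 \<in> B \<Longrightarrow> y \<in> B2 - B1 \<Longrightarrow> \<exists>x\<in>B1 - B2. insert y (B1 - {x}) \<in> B"
proof (induction "card (B2 - B1)" arbitrary: B2 rule: less_induct)
  case less
  have f1: "finite B1" "finite B2" using fin less.prems by auto
  show ?case
  proof (cases "B2 - B1 = {y}")
    case True
    have "card B1 = card B2" using cardeq less.prems by auto
    hence "card (B1 - B2) = card (B2 - B1)"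
      using card_Diff_subset_Int[of B1 B2] card_Diff_subset_Int[of B2 B1] f1
      by (simp add: Int_commute)
    hence "card (B1 - B2) = 1" using True by simp
    then obtain x where x: "B1 - B2 = {x}" by (meson card_1_singletonE)
    have "insert y (B1 - {x}) = B2" using x True by blast
    thus ?thesis using x less.prems by auto
  next
    case False
    then obtain z where z: "z \<in> B2 - B1" "z \<noteq> y" using less.prems by blast
    obtain w where w: "w \<in> B1 - B2" "insert w (B2 - {z}) \<in> B"
      using ax less.prems z by metis
    let ?B2 = "insert w (B2 - {z})"
    have eq: "?B2 - B1 = (B2 - B1) - {z}" using w by blast
    have lt: "card (?B2 - B1) < card (B2 - B1)"
      unfolding eq using z f1 by (meson card_Diff1_less finite_Diff)
    have "y \<in> ?B2 - B1" using less.prems z w by blast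
    then obtain x where x: "x \<in> B1 - ?B2" "insert y (B1 - {x}) \<in> B"
      using less.hyps[OF lt less.prems(1) w(2)] by blast
    have "x \<in> B1 - B2" using x z by blast
    thus ?thesis using x by blast
  qed
qed

locale cctx =
  fixes n c :: nat and B :: "nat set set" and v :: "nat \<Rightarrow> nat"
  assumes mat: "matroid {1..n} B" and rk: "matroid_rank_eq B c"
    and injv: "inj_on v {1..c}" and Vb: "v ` {1..c} \<in> B"
begin

definition "AA i = v ` {1..i}"
abbreviation "JJ i \<equiv> Jseq n B v i"
abbreviation "GG i \<equiv> mingens (JJ i)"

lemma ax: "\<forall>B1\<in>B. \<forall>B2\<in>B. \<forall>x\<in>B1 - B2. \<exists>y\<in>B2 - B1. insert y (B1 - {x}) \<in> B"
  using mat unfolding matroid_def by blast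
lemma subE: "F \<in> B \<Longrightarrow> F \<subseteq> {1..n}" using mat unfolding matroid_def by blast
lemma finB: "F \<in> B \<Longrightarrow> finite F" using subE finite_subset by blast
lemma cardB: "F \<in> B \<Longrightarrow> card F = c" using rk unfolding matroid_rank_eq_def by blast

lemma symex: "B1 \<in> B \<Longrightarrow> B2 \<in> B \<Longrightarrow> y \<in> B2 - B1 \<Longrightarrow> \<exists>x\<in>B1 - B2. insert y (B1 - {x}) \<in> B"
  by (rule sym_exch[OF _ _ ax]) (auto simp: finB cardB)

lemma contract_all: "(\<forall>X\<in>contract B A. P X) \<longleftrightarrow> (\<forall>F\<in>B. A \<subseteq> F \<longrightarrow> P (F - A))"
  unfolding contract_def by auto

lemma JJ_mem: "m \<in> JJ i \<longleftrightarrow> m \<in> rmonos n \<and> (\<forall>F\<in>B. AA i \<subseteq> F \<longrightarrow> (\<exists>j\<in>F. j \<notin> AA i \<and> m j \<noteq> 0))"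
proof -
  have "m \<in> JJ i \<longleftrightarrow> m \<in> rmonos n \<and> (\<forall>X\<in>contract B (AA i). \<exists>j\<in>X. m j \<noteq> 0)"
    unfolding Jseq_def Jmat_def AA_def by simp
  also have "\<dots> \<longleftrightarrow> m \<in> rmonos n \<and> (\<forall>F\<in>B. AA i \<subseteq> F \<longrightarrow> (\<exists>j\<in>F - AA i. m j \<noteq> 0))"
    by (simp only: contract_all)
  finally show ?thesis by blast
qed

lemma AA_Suc: "AA (Suc i) = insert (v (Suc i)) (AA i)"
  unfolding AA_def by (simp add: atLeastAtMostSuc_conv)
lemma u_notin: "Suc i \<le> c \<Longrightarrow> v (Suc i) \<notin> AA i"
proof
  assume a: "Suc i \<le> c" "v (Suc i) \<in> AA i"
  then obtain x where x: "x \<in> {1..i}" "v (Suc i) = v x" unfolding AA_def by blast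
  have "Suc i = x" using inj_onD[OF injv x(2)] x(1) a(1) by simp
  thus False using x(1) by simp
qed
lemma u_in: "Suc i \<le> c \<Longrightarrow> v (Suc i) \<in> AA c"
  unfolding AA_def by auto
lemma AA_sub: "i \<le> c \<Longrightarrow> AA i \<subseteq> AA c" unfolding AA_def by auto
lemma AAc: "AA c \<in> B" using Vb unfolding AA_def .
lemma JJ0: "JJ 0 = Jmat n B"
  unfolding Jseq_def contract_def by simp
lemma JJc: "JJ c = {}"
proof -
  { fix m assume "m \<in> JJ c"
    hence "\<exists>j\<in>AA c. j \<notin> AA c \<and> m j \<noteq> 0" using AAc unfolding JJ_mem by blast
    hence False by blast }
  thus ?thesis by blast
qed
lemma JJ_rm: "m \<in> JJ i \<Longrightarrow> m \<in> rmonos n" unfolding JJ_mem by blast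

lemma supp_cl: "m \<in> JJ i \<Longrightarrow> m' \<in> rmonos n \<Longrightarrow> (\<forall>j. m j \<noteq> 0 \<longrightarrow> m' j \<noteq> 0) \<Longrightarrow> m' \<in> JJ i"
  unfolding JJ_mem by fast

lemma F1: assumes "Suc i \<le> c" "m \<in> JJ (Suc i)" shows "m \<in> JJ i"
  unfolding JJ_mem
proof (intro conjI ballI impI)
  show "m \<in> rmonos n" using assms JJ_rm by blast
  fix F assume F: "F \<in> B" "AA i \<subseteq> F"
  let ?u = "v (Suc i)"
  show "\<exists>j\<in>F. j \<notin> AA i \<and> m j \<noteq> 0"
  proof (cases "?u \<in> F")
    case True
    hence "AA (Suc i) \<subseteq> F" using F AA_Suc by auto
    then obtain j where "j \<in> F" "j \<notin> AA (Suc i)" "m j \<noteq> 0" using assms(2) F unfolding JJ_mem by blast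
    thus ?thesis using AA_Suc by auto
  next
    case False
    obtain x where x: "x \<in> F - AA c" "insert ?u (F - {x}) \<in> B"
      using symex[OF F(1) AAc, of ?u] False u_in[OF assms(1)] by blast
    have "AA (Suc i) \<subseteq> insert ?u (F - {x})"
      using AA_Suc F x AA_sub[of i] assms(1) by auto
    then obtain j where j: "j \<in> insert ?u (F - {x})" "j \<notin> AA (Suc i)" "m j \<noteq> 0"
      using assms(2) x unfolding JJ_mem by blast
    thus ?thesis using AA_Suc by auto
  qed
qed

lemma G_zero: assumes "m \<in> GG i" "a \<in> AA i" shows "m a = 0"
proof -
  have m: "m \<in> JJ i" using assms unfolding mingens_def by blast
  have "m(a:=0) \<in> JJ i" unfolding JJ_mem
  proof (intro conjI ballI impI)
    show "m(a:=0) \<in> rmonos n" using JJ_rm[OF m] unfolding rmonos_def by auto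
    fix F assume "F \<in> B" "AA i \<subseteq> F"
    then obtain j where "j \<in> F" "j \<notin> AA i" "m j \<noteq> 0" using m unfolding JJ_mem by blast
    thus "\<exists>j\<in>F. j \<notin> AA i \<and> (m(a:=0)) j \<noteq> 0" using assms(2) by (intro bexI[of _ j]) auto
  qed
  moreover have "mdvd (m(a:=0)) m" unfolding mdvd_def by auto
  ultimately have "m(a:=0) = m" using assms(1) unfolding mingens_def by blast
  hence "(m(a:=0)) a = m a" by (rule arg_cong)
  thus ?thesis by simp
qed

lemma G_01: assumes "m \<in> GG i" shows "m j \<le> 1"
proof (rule ccontr)
  assume a: "\<not> m j \<le> 1"
  have m: "m \<in> JJ i" using assms unfolding mingens_def by blast
  have "m(j:=1) \<in> rmonos n" using JJ_rm[OF m] a unfolding rmonos_def by auto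
  moreover have "\<forall>j'. m j' \<noteq> 0 \<longrightarrow> (m(j:=1)) j' \<noteq> 0" by simp
  ultimately have "m(j:=1) \<in> JJ i" using supp_cl[OF m] by blast
  moreover have "mdvd (m(j:=1)) m" using a unfolding mdvd_def by auto
  ultimately have "m(j:=1) = m" using assms(1) unfolding mingens_def by blast
  hence "(m(j:=1)) j = m j" by (rule arg_cong)
  hence "m j = 1" by simp
  thus False using a by simp
qed

lemma G_JJ: "m \<in> GG i \<Longrightarrow> m \<in> JJ i" unfolding mingens_def by blast

lemma F2: assumes "Suc i \<le> c" "m \<in> GG (Suc i)" shows "m \<in> GG i"
proof -
  have m: "m \<in> JJ i" using F1[OF assms(1) G_JJ[OF assms(2)]] .
  let ?u = "v (Suc i)"
  have mu: "m ?u = 0" using G_zero[OF assms(2)] AA_Suc by auto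
  have "m' = m" if m': "m' \<in> JJ i" "mdvd m' m" for m'
  proof -
    have "m' ?u = 0" using mu m'(2) unfolding mdvd_def by (metis le_zero_eq)
    hence "m' \<in> JJ (Suc i)" using m'(1) unfolding JJ_mem AA_Suc
      by (metis insert_iff insert_subset)
    thus ?thesis using assms(2) m'(2) unfolding mingens_def by blast
  qed
  thus ?thesis using m unfolding mingens_def by blast
qed

lemma chain: "j \<le> c \<Longrightarrow> i \<le> j \<Longrightarrow> m \<in> GG j \<Longrightarrow> m \<in> GG i"
proof (induction j)
  case 0 thus ?case by simp
next
  case (Suc j)
  show ?case
  proof (cases "i = Suc j")
    case True thus ?thesis using Suc by simp
  next
    case False
    thus ?thesis using Suc F2[of j m] by simp
  qed
qed


lemma G0_all: assumes "N \<in> GG 0" "\<not> (\<exists>i<c. N \<in> GG i \<and> N \<notin> GG (Suc i))"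
  shows "i \<le> c \<Longrightarrow> N \<in> GG i"
proof (induction i)
  case 0 thus ?case using assms(1) by simp
next
  case (Suc i)
  thus ?case using assms(2) by auto
qed

lemma idx_wit: assumes "N \<in> GG 0" shows "\<exists>i<c. N \<in> GG i \<and> N \<notin> GG (Suc i)"
proof (rule ccontr)
  assume "\<not> ?thesis"
  hence "N \<in> GG c" using G0_all[OF assms] by blast
  thus False using JJc unfolding mingens_def by blast
qed

lemma idx_uniq: assumes "i < c" "N \<in> GG i" "N \<notin> GG (Suc i)" "i' < c" "N \<in> GG i'" "N \<notin> GG (Suc i')"
  shows "i = i'"
proof (rule ccontr)
  assume "i \<noteq> i'"
  hence "i < i' \<or> i' < i" by arith
  thus False
  proof
    assume "i < i'" thus False using chain[of i' "Suc i" N] assms by simp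
  next
    assume "i' < i" thus False using chain[of i "Suc i'" N] assms by simp
  qed
qed

lemma idx_eq: assumes "i < c" "N \<in> GG i" "N \<notin> GG (Suc i)" shows "idx n B v c N = i"
  unfolding idx_def
proof (rule the_equality)
  show "i < c \<and> N \<in> GG i \<and> N \<notin> GG (Suc i)" using assms by blast
  fix i' assume "i' < c \<and> N \<in> GG i' \<and> N \<notin> GG (Suc i')"
  thus "i' = i" using idx_uniq assms by blast
qed

lemma idx_spec: assumes "N \<in> GG 0"
  shows "idx n B v c N < c \<and> N \<in> GG (idx n B v c N) \<and> N \<notin> GG (Suc (idx n B v c N))"
proof -
  obtain i where i: "i < c" "N \<in> GG i" "N \<notin> GG (Suc i)" using idx_wit[OF assms] by blast
  thus ?thesis using idx_eq[OF i] by simp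
qed

lemma idx_ge: assumes "N \<in> GG 0" "j \<le> c" "N \<in> GG j" shows "j \<le> idx n B v c N"
proof (rule ccontr)
  assume "\<not> ?thesis"
  hence "Suc (idx n B v c N) \<le> j" by simp
  thus False using chain[of j "Suc (idx n B v c N)" N] assms idx_spec[OF assms(1)] by simp
qed

lemma notin_next: assumes "Suc k \<le> c" "N \<in> GG k" "N \<notin> GG (Suc k)" shows "N \<notin> JJ (Suc k)"
proof
  assume a: "N \<in> JJ (Suc k)"
  have "m' = N" if "m' \<in> JJ (Suc k)" "mdvd m' N" for m'
    using F1[OF assms(1) that(1)] that(2) assms(2) unfolding mingens_def by blast
  hence "N \<in> GG (Suc k)" using a unfolding mingens_def by blast
  thus False using assms(3) by blast
qed

lemma u_supp: assumes "N \<notin> JJ (Suc k)" "N \<in> JJ k" shows "N (v (Suc k)) \<noteq> 0"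
proof
  assume a: "N (v (Suc k)) = 0"
  have "N \<in> JJ (Suc k)" unfolding JJ_mem
  proof (intro conjI ballI impI)
    show "N \<in> rmonos n" using assms(2) JJ_rm by blast
    fix F assume F: "F \<in> B" "AA (Suc k) \<subseteq> F"
    hence "AA k \<subseteq> F" using AA_Suc by auto
    then obtain j where "j \<in> F" "j \<notin> AA k" "N j \<noteq> 0" using assms(2) F(1) unfolding JJ_mem by blast
    thus "\<exists>j\<in>F. j \<notin> AA (Suc k) \<and> N j \<noteq> 0" using a AA_Suc by (intro bexI[of _ j]) auto
  qed
  thus False using assms(1) by blast
qed

lemma elim: assumes k: "Suc k \<le> c" and N: "N \<in> GG k" and N': "N' \<in> GG k"
  and nN: "N \<notin> JJ (Suc k)" and nN': "N' \<notin> JJ (Suc k)" and ne: "N \<noteq> N'"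
  and F: "F \<in> B" "AA (Suc k) \<subseteq> F"
  shows "\<exists>j\<in>F. j \<notin> AA (Suc k) \<and> (N j \<noteq> 0 \<or> N' j \<noteq> 0)"
proof (rule ccontr)
  assume contra: "\<not> ?thesis"
  let ?u = "v (Suc k)"
  have NJ: "N \<in> JJ k" and N'J: "N' \<in> JJ k" using N N' G_JJ by auto
  have Nu: "N ?u \<noteq> 0" using u_supp[OF nN NJ] .
  have N'u: "N' ?u \<noteq> 0" using u_supp[OF nN' N'J] .
  have uA: "?u \<notin> AA k" using u_notin[OF k] .
  obtain e where e: "N e \<noteq> 0" "N' e = 0"
  proof (rule ccontr)
    assume "\<not> thesis"
    hence sub: "\<forall>e. N e \<noteq> 0 \<longrightarrow> N' e \<noteq> 0" using that by blast
    have "mdvd N N'" unfolding mdvd_def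
    proof
      fix j show "N j \<le> N' j"
      proof (cases "N j = 0")
        case False
        hence "N' j \<noteq> 0" using sub by blast
        hence "N' j \<ge> 1" by simp
        thus ?thesis using G_01[OF N, of j] by linarith
      qed simp
    qed
    hence "N = N'" using N' NJ unfolding mingens_def by blast
    thus False using ne by blast
  qed
  have eu: "e \<noteq> ?u" using e N'u by auto
  have "N(e:=0) \<in> rmonos n" using JJ_rm[OF NJ] unfolding rmonos_def by auto
  moreover have "mdvd (N(e:=0)) N" unfolding mdvd_def by auto
  moreover have "N(e:=0) \<noteq> N" using e(1) by (metis fun_upd_same)
  ultimately have "N(e:=0) \<notin> JJ k" using N unfolding mingens_def by blast
  then obtain G where G: "G \<in> B" "AA k \<subseteq> G" "\<forall>j\<in>G. j \<notin> AA k \<longrightarrow> (N(e:=0)) j = 0"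
    using \<open>N(e:=0) \<in> rmonos n\<close> unfolding JJ_mem by blast
  obtain j0 where j0: "j0 \<in> G" "j0 \<notin> AA k" "N j0 \<noteq> 0" using NJ G unfolding JJ_mem by blast
  have "j0 = e" using G(3) j0 by (cases "j0 = e") auto
  hence eG: "e \<in> G" "e \<notin> AA k" using j0 by auto
  have uG: "?u \<notin> G"
  proof
    assume "?u \<in> G" hence "(N(e:=0)) ?u = 0" using G(3) uA by blast
    thus False using Nu eu by simp
  qed
  have uF: "?u \<in> F" using F AA_Suc by auto
  obtain y where y: "y \<in> G - F" "insert y (F - {?u}) \<in> B" using ax F(1) G(1) uF uG by blast
  let ?F' = "insert y (F - {?u})"
  have AF': "AA k \<subseteq> ?F'" using F(2) AA_Suc uA by auto
  obtain j where j: "j \<in> ?F'" "j \<notin> AA k" "N j \<noteq> 0" using NJ y(2) AF' unfolding JJ_mem by blast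
  have zero: "N j = 0 \<and> N' j = 0" if "j \<in> F" "j \<notin> AA (Suc k)" for j using contra that by blast
  have "j = y"
  proof (rule ccontr)
    assume "j \<noteq> y" hence "j \<in> F" "j \<notin> AA (Suc k)" using j AA_Suc by auto
    thus False using zero[of j] j(3) by simp
  qed
  hence "y = e" using G(3) y(1) j by (cases "y = e") auto
  obtain j' where j': "j' \<in> ?F'" "j' \<notin> AA k" "N' j' \<noteq> 0" using N'J y(2) AF' unfolding JJ_mem by blast
  show False
  proof (cases "j' = y")
    case True thus False using j' e \<open>y = e\<close> by simp
  next
    case False hence "j' \<in> F" "j' \<notin> AA (Suc k)" using j' AA_Suc by auto
    thus False using zero[of j'] j'(3) by simp
  qed
qed

lemma exmin: assumes "x \<in> JJ i" shows "\<exists>y\<in>GG i. mdvd y x"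
proof -
  let ?P = "\<lambda>y. y \<in> JJ i \<and> mdvd y x"
  let ?f = "\<lambda>y::mono. sum y {1..n}"
  have "?P x" using assms unfolding mdvd_def by auto
  then obtain y where y: "?P y" "\<And>z. ?P z \<Longrightarrow> ?f y \<le> ?f z"
    using ex_has_least_nat[of ?P x ?f] by blast
  have "z = y" if z: "z \<in> JJ i" "mdvd z y" for z
  proof
    fix j
    show "z j = y j"
    proof (cases "j \<in> {1..n}")
      case True
      have "?P z" using z y(1) unfolding mdvd_def by (meson order_trans)
      hence le: "?f y \<le> ?f z" using y(2) by blast
      show ?thesis
      proof (rule ccontr)
        assume "z j \<noteq> y j"
        hence "z j < y j" using z(2) unfolding mdvd_def by (metis le_neq_implies_less)
        hence "?f z < ?f y" using True z(2) unfolding mdvd_def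
          by (intro sum_strict_mono_ex1) auto
        thus False using le by simp
      qed
    next
      case False
      have "z j = 0" using JJ_rm[OF z(1)] False unfolding rmonos_def by blast
      moreover have "y j = 0" using JJ_rm[OF conjunct1[OF y(1)]] False unfolding rmonos_def by blast
      ultimately show ?thesis by simp
    qed
  qed
  hence "y \<in> GG i" using y(1) unfolding mingens_def by blast
  thus ?thesis using y(1) by blast
qed

end

lemma mmult_rm: "m \<in> rmonos n \<Longrightarrow> N \<in> rmonos n \<Longrightarrow> mmult m N \<in> rmonos n"
  unfolding rmonos_def mmult_def by auto

theorem corollary4p12:
  fixes n c :: nat and B :: "nat set set" and v :: "nat \<Rightarrow> nat"
    and r :: "(mono \<times> mono) set" and N :: mono
  assumes "matroid {1..n} B"
    and "matroid_rank_eq B c"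
    and "inj_on v {1..c}" and "v ` {1..c} \<in> B"
    and "strict_linear_order_on (mingens (Jmat n B)) r"
    and "N \<in> mingens (Jmat n B)"
    and "N \<noteq> minG n B v c r"
  shows "CN n B v c r N = mcolon n (Jseq n B v (Suc (idx n B v c N))) N
         \<and> C_matroidal n (CN n B v c r N)"
proof -
  interpret S: cctx n c B v using assms(1-4) by unfold_locales
  have N0: "N \<in> mingens (Jseq n B v 0)" using assms(6) S.JJ0 by simp
  define k where "k = idx n B v c N"
  have k: "k < c" "N \<in> mingens (Jseq n B v k)" "N \<notin> mingens (Jseq n B v (Suc k))"
    using S.idx_spec[OF N0] k_def by auto
  have nN: "N \<notin> Jseq n B v (Suc k)" using S.notin_next k by simp
  have Nrm: "N \<in> rmonos n" using S.JJ_rm S.G_JJ k(2) by blast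
  have irr: "(N', N') \<notin> r" for N'
    using assms(5) unfolding strict_linear_order_on_def irrefl_def by blast
  have eq: "CN n B v c r N = mcolon n (Jseq n B v (Suc k)) N"
  proof (rule set_eqI)
    fix m
    show "m \<in> CN n B v c r N \<longleftrightarrow> m \<in> mcolon n (Jseq n B v (Suc k)) N"
    proof
      assume "m \<in> CN n B v c r N"
      then obtain N' where m: "m \<in> rmonos n" and N': "N' \<in> mingens (Jmat n B)"
          "prec n B v c r N' N" "mdvd N' (mmult m N)"
        unfolding CN_def mcolon_def mideal_gen_def by blast
      have N'0: "N' \<in> mingens (Jseq n B v 0)" using N'(1) S.JJ0 by simp
      have mm: "mmult m N \<in> rmonos n" using mmult_rm m Nrm by blast
      have "mmult m N \<in> Jseq n B v (Suc k)"
      proof (cases "idx n B v c N' > k")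
        case True
        have "N' \<in> mingens (Jseq n B v (Suc k))"
          using S.chain[of "idx n B v c N'" "Suc k" N'] S.idx_spec[OF N'0] True by simp
        hence N'J: "N' \<in> Jseq n B v (Suc k)" by (rule S.G_JJ)
        have "\<forall>j. N' j \<noteq> 0 \<longrightarrow> mmult m N j \<noteq> 0"
        proof (intro allI impI)
          fix j assume "N' j \<noteq> 0"
          moreover have "N' j \<le> m j + N j" using N'(3) unfolding mdvd_def mmult_def by blast
          ultimately show "mmult m N j \<noteq> 0" unfolding mmult_def by arith
        qed
        thus ?thesis using S.supp_cl[OF N'J mm] by blast
      next
        case False
        hence same: "idx n B v c N' = k" "(N', N) \<in> r" using N'(2) unfolding prec_def k_def by auto
        hence ne: "N \<noteq> N'" using irr by blast
        have k': "N' \<in> mingens (Jseq n B v k)" "N' \<notin> mingens (Jseq n B v (Suc k))"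
          using S.idx_spec[OF N'0] same(1) by auto
        have nN': "N' \<notin> Jseq n B v (Suc k)" using S.notin_next k' k(1) by simp
        show ?thesis unfolding S.JJ_mem
        proof (intro conjI ballI impI)
          show "mmult m N \<in> rmonos n" by (rule mm)
          fix F assume F: "F \<in> B" "S.AA (Suc k) \<subseteq> F"
          obtain j where j: "j \<in> F" "j \<notin> S.AA (Suc k)" "N j \<noteq> 0 \<or> N' j \<noteq> 0"
            using S.elim[of k N N' F] k(1) k(2) k'(1) nN nN' ne F by auto
          have "N' j \<le> m j + N j" using N'(3) unfolding mdvd_def mmult_def by blast
          hence "mmult m N j \<noteq> 0" using j(3) unfolding mmult_def by auto
          thus "\<exists>j\<in>F. j \<notin> S.AA (Suc k) \<and> mmult m N j \<noteq> 0" using j by blast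
        qed
      qed
      thus "m \<in> mcolon n (Jseq n B v (Suc k)) N" unfolding mcolon_def using m by blast
    next
      assume "m \<in> mcolon n (Jseq n B v (Suc k)) N"
      hence m: "m \<in> rmonos n" "mmult m N \<in> Jseq n B v (Suc k)" unfolding mcolon_def by auto
      obtain N'' where N'': "N'' \<in> mingens (Jseq n B v (Suc k))" "mdvd N'' (mmult m N)"
        using S.exmin[OF m(2)] by blast
      have N''0: "N'' \<in> mingens (Jseq n B v 0)" using S.chain[of "Suc k" 0 N''] N'' k(1) by simp
      have "Suc k \<le> idx n B v c N''" using S.idx_ge[OF N''0 _ N''(1)] k(1) by simp
      hence "prec n B v c r N'' N" unfolding prec_def k_def by simp
      moreover have "N'' \<in> mingens (Jmat n B)" using N''0 S.JJ0 by simp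
      moreover have "mmult m N \<in> rmonos n" using mmult_rm m(1) Nrm by blast
      ultimately show "m \<in> CN n B v c r N" unfolding CN_def mcolon_def mideal_gen_def
        using m(1) N''(2) by blast
    qed
  qed
  have cm: "C_matroidal n (mcolon n (Jseq n B v (Suc k)) N)"
  proof -
    let ?A = "S.AA (Suc k)"
    define BB where "BB = {X \<in> contract B ?A. \<forall>j\<in>X. N j = 0}"
    have BBm: "X \<in> BB \<longleftrightarrow> (\<exists>F\<in>B. ?A \<subseteq> F \<and> X = F - ?A \<and> (\<forall>j\<in>F - ?A. N j = 0))" for X
      unfolding BB_def contract_def by auto
    have ne: "BB \<noteq> {}"
    proof -
      obtain F where F: "F \<in> B" "?A \<subseteq> F" "\<forall>j\<in>F. j \<notin> ?A \<longrightarrow> N j = 0"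
        using nN Nrm unfolding S.JJ_mem by blast
      hence "F - ?A \<in> BB" unfolding BBm by blast
      thus ?thesis by blast
    qed
    have mat: "matroid {1..n} BB"
      unfolding matroid_def
    proof (intro conjI ballI)
      show "finite {1..n}" by simp
      show "BB \<noteq> {}" by (rule ne)
    next
      fix X assume "X \<in> BB" thus "X \<subseteq> {1..n}" unfolding BBm using S.subE by blast
    next
      fix B1 B2 x assume B1: "B1 \<in> BB" and B2: "B2 \<in> BB" and x: "x \<in> B1 - B2"
      obtain F1 where F1: "F1 \<in> B" "?A \<subseteq> F1" "B1 = F1 - ?A" "\<forall>j\<in>F1 - ?A. N j = 0"
        using B1 unfolding BBm by blast
      obtain F2 where F2: "F2 \<in> B" "?A \<subseteq> F2" "B2 = F2 - ?A" "\<forall>j\<in>F2 - ?A. N j = 0"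
        using B2 unfolding BBm by blast
      have "x \<in> F1 - F2" using x F1 F2 by blast
      then obtain y where y: "y \<in> F2 - F1" "insert y (F1 - {x}) \<in> B" using S.ax F1(1) F2(1) by blast
      have yA: "y \<notin> ?A" using y F1(2) by blast
      have xA: "x \<notin> ?A" using x F1(3) by blast
      have "insert y (B1 - {x}) \<in> BB" unfolding BBm
        apply (rule bexI[OF _ y(2)]) using F1 F2 y yA xA by auto
      moreover have "y \<in> B2 - B1" using y yA F1 F2 by blast
      ultimately show "\<exists>y\<in>B2 - B1. insert y (B1 - {x}) \<in> BB" by blast
    qed
    have JB: "Jmat n BB = mcolon n (Jseq n B v (Suc k)) N"
    proof (rule set_eqI)
      fix m
      show "m \<in> Jmat n BB \<longleftrightarrow> m \<in> mcolon n (Jseq n B v (Suc k)) N"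
      proof
        assume a: "m \<in> Jmat n BB"
        hence m: "m \<in> rmonos n" "\<forall>X\<in>BB. \<exists>j\<in>X. m j \<noteq> 0" unfolding Jmat_def by auto
        have "mmult m N \<in> Jseq n B v (Suc k)" unfolding S.JJ_mem
        proof (intro conjI ballI impI)
          show "mmult m N \<in> rmonos n" using mmult_rm m(1) Nrm by blast
          fix F assume F: "F \<in> B" "?A \<subseteq> F"
          show "\<exists>j\<in>F. j \<notin> ?A \<and> mmult m N j \<noteq> 0"
          proof (cases "\<exists>j\<in>F - ?A. N j \<noteq> 0")
            case True thus ?thesis unfolding mmult_def by auto
          next
            case False
            hence "F - ?A \<in> BB" using F unfolding BBm by blast
            then obtain j where "j \<in> F - ?A" "m j \<noteq> 0" using m(2) by blast
            thus ?thesis unfolding mmult_def by auto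
          qed
        qed
        thus "m \<in> mcolon n (Jseq n B v (Suc k)) N" unfolding mcolon_def using m(1) by blast
      next
        assume "m \<in> mcolon n (Jseq n B v (Suc k)) N"
        hence m: "m \<in> rmonos n" "mmult m N \<in> Jseq n B v (Suc k)" unfolding mcolon_def by auto
        have "\<exists>j\<in>X. m j \<noteq> 0" if X: "X \<in> BB" for X
        proof -
          obtain F where F: "F \<in> B" "?A \<subseteq> F" "X = F - ?A" "\<forall>j\<in>F - ?A. N j = 0"
            using X unfolding BBm by blast
          obtain j where "j \<in> F" "j \<notin> ?A" "mmult m N j \<noteq> 0"
            using m(2) F(1,2) unfolding S.JJ_mem by blast
          thus ?thesis using F(3,4) unfolding mmult_def by auto
        qed
        thus "m \<in> Jmat n BB" unfolding Jmat_def using m(1) by blast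
      qed
    qed
    show ?thesis unfolding C_matroidal_def
      by (intro exI[of _ "{1..n}"] exI[of _ BB]) (use mat JB in auto)
  qed
  show ?thesis using eq cm k_def by simp
qed

end
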